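(* Let $R$ be a unital ring and $E$ a directed graph which is not the null graph. Let $S=M(\mathbb{Z},I)\cup\{0\}$ and let $w$ be a canonical weight mapping on $E$; view $L_R(E)$ as a canonically $S$-graded ring. If $(L_R(E))_e$ is a von Neumann regular ring for every nonzero idempotent $e\in S$, then $R$ is von Neumann regular.
   Context: Directed graph $E=(E^0,E^1,\mathrm{r},\mathrm{s})$; not null means $E^0\ne\emptyset$; paths $E^*$ (vertices as length-$0$ paths); $\mathrm{Reg}(E)$ = vertices $v$ with $\mathrm{s}^{-1}(v)$ nonempty finite. $L_R(E)$ is the $R$-algebra generated by $E^0$, $E^1$, $\{\alpha^*\}$ ($R$ commuting with generators) with relations $vv'=\delta_{v,v'}v$; $\mathrm{s}(\alpha)\alpha=\alpha\mathrm{r}(\alpha)=\alpha$, $\mathrm{r}(\alpha)\alpha^*=\alpha^*\mathrm{s}(\alpha)=\alpha^*$; $\alpha^*\alpha'=\delta_{\alpha,\alpha'}\mathrm{r}(\alpha)$; $\sum_{\mathrm{s}(\alpha)=v}\alpha\alpha^*=v$ for $v\in\mathrm{Reg}(E)$. $M(\mathbb{Z},I)=I\times\mathbb{Z}\times I$, $(i,a,j)(k,b,l)=(i,a+b,l)$ if $j=k$, else undefined; $S=M(\mathbb{Z},I)\cup\{0\}$, undefined products $0$, $0$ absorbing; $(i,a,j)^{-1}=(j,-a,i)$. Canonical weight mapping: vertices get weights $(i,0,i)$, edges $(i,1,j)$, $w(\alpha^* )=w(\alpha)^{-1}$, $w(\mathrm{s}(\alpha))w(\alpha)=w(\alpha)=w(\alpha)w(\mathrm{r}(\alpha))$;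 for each nonzero idempotent $f$, edges with source of weight $f$ share a weight and edges with range of weight $f$ share a weight; extended multiplicatively with $w(\mu\eta^* )=w(\mu)w(\eta)^{-1}$. $(L_R(E))_s$ = $R$-span of $\mu\eta^*$, $\mathrm{r}(\mu)=\mathrm{r}(\eta)$, $w(\mu\eta^* )=s$. *)

theory Defs
  imports Main
begin

datatype ('v,'e) gen = V 'v | Ed 'e | Gh 'e

text \<open>The semigroup S = M(Z,I) \<union> {0}: None is 0, Some (i,a,j) is (i,a,j).\<close>
type_synonym 'i S = "('i \<times> int \<times> 'i) option"

fun smult :: "'i S \<Rightarrow> 'i S \<Rightarrow> 'i S" where
  "smult (Some (i,a,j)) (Some (k,b,l)) = (if j = k then Some (i, a + b, l) else None)"
| "smult _ _ = None"

fun sinv :: "'i S \<Rightarrow> 'i S" where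
  "sinv (Some (i,a,j)) = Some (j, -a, i)"
| "sinv None = None"

text \<open>Free R-algebra on the generators (R commuting with generators):
  finitely supported functions from words to R, with convolution product.\<close>
definition valid_gen :: "'v set \<Rightarrow> 'e set \<Rightarrow> ('v,'e) gen \<Rightarrow> bool" where
  "valid_gen E0 E1 g = (case g of V v \<Rightarrow> v \<in> E0 | Ed e \<Rightarrow> e \<in> E1 | Gh e \<Rightarrow> e \<in> E1)"

definition free_alg :: "'v set \<Rightarrow> 'e set \<Rightarrow> (('v,'e) gen list \<Rightarrow> 'a::ring_1) set" where
  "free_alg E0 E1 = {f. finite {w. f w \<noteq> 0} \<and> (\<forall>w. f w \<noteq> 0 \<longrightarrow> (\<forall>g\<in>set w. valid_gen E0 E1 g))}"

definition fmul :: "('g list \<Rightarrow> 'a::ring_1) \<Rightarrow> ('g list \<Rightarrow> 'a) \<Rightarrow> 'g list \<Rightarrow> 'a" where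
  "fmul f g = (\<lambda>w. \<Sum>i\<in>{..length w}. f (take i w) * g (drop i w))"

definition fsub :: "('g list \<Rightarrow> 'a::ring_1) \<Rightarrow> ('g list \<Rightarrow> 'a) \<Rightarrow> 'g list \<Rightarrow> 'a" where
  "fsub f g = (\<lambda>w. f w - g w)"

definition ind :: "'g list \<Rightarrow> 'g list \<Rightarrow> 'a::ring_1" where
  "ind u = (\<lambda>w. if w = u then 1 else 0)"

definition lpa_rels :: "'v set \<Rightarrow> 'e set \<Rightarrow> ('e \<Rightarrow> 'v) \<Rightarrow> ('e \<Rightarrow> 'v)
    \<Rightarrow> (('v,'e) gen list \<Rightarrow> 'a::ring_1) set" where
  "lpa_rels E0 E1 r s =
     {fsub (ind [V v, V v']) (if v = v' then ind [V v] else (\<lambda>_. 0)) | v v'. v \<in> E0 \<and> v' \<in> E0}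
   \<union> {fsub (ind [V (s \<alpha>), Ed \<alpha>]) (ind [Ed \<alpha>]) | \<alpha>. \<alpha> \<in> E1}
   \<union> {fsub (ind [Ed \<alpha>, V (r \<alpha>)]) (ind [Ed \<alpha>]) | \<alpha>. \<alpha> \<in> E1}
   \<union> {fsub (ind [V (r \<alpha>), Gh \<alpha>]) (ind [Gh \<alpha>]) | \<alpha>. \<alpha> \<in> E1}
   \<union> {fsub (ind [Gh \<alpha>, V (s \<alpha>)]) (ind [Gh \<alpha>]) | \<alpha>. \<alpha> \<in> E1}
   \<union> {fsub (ind [Gh \<alpha>, Ed \<alpha>']) (if \<alpha> = \<alpha>' then ind [V (r \<alpha>)] else (\<lambda>_. 0))
        | \<alpha> \<alpha>'. \<alpha> \<in> E1 \<and> \<alpha>' \<in> E1}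
   \<union> {fsub (\<lambda>w. \<Sum>\<alpha>\<in>{\<alpha>\<in>E1. s \<alpha> = v}. ind [Ed \<alpha>, Gh \<alpha>] w) (ind [V v])
        | v. v \<in> E0 \<and> {\<alpha>\<in>E1. s \<alpha> = v} \<noteq> {} \<and> finite {\<alpha>\<in>E1. s \<alpha> = v}}"

text \<open>Two-sided ideal of the free algebra generated by the relations;
  L_R(E) is the quotient of the free algebra by it.\<close>
inductive_set lpa_ideal :: "'v set \<Rightarrow> 'e set \<Rightarrow> ('e \<Rightarrow> 'v) \<Rightarrow> ('e \<Rightarrow> 'v)
    \<Rightarrow> (('v,'e) gen list \<Rightarrow> 'a::ring_1) set"
  for E0 E1 r s where
  rel: "f \<in> lpa_rels E0 E1 r s \<Longrightarrow> f \<in> lpa_ideal E0 E1 r s"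
| zero: "(\<lambda>_. 0) \<in> lpa_ideal E0 E1 r s"
| add: "f \<in> lpa_ideal E0 E1 r s \<Longrightarrow> g \<in> lpa_ideal E0 E1 r s
        \<Longrightarrow> (\<lambda>w. f w + g w) \<in> lpa_ideal E0 E1 r s"
| mult: "f \<in> lpa_ideal E0 E1 r s \<Longrightarrow> a \<in> free_alg E0 E1 \<Longrightarrow> b \<in> free_alg E0 E1
        \<Longrightarrow> fmul (fmul a f) b \<in> lpa_ideal E0 E1 r s"

text \<open>Paths: (v, es), with v the source; es = [] is the vertex v as a path of length 0.\<close>
definition is_path :: "'v set \<Rightarrow> 'e set \<Rightarrow> ('e \<Rightarrow> 'v) \<Rightarrow> ('e \<Rightarrow> 'v) \<Rightarrow> 'v \<times> 'e list \<Rightarrow> bool" where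
  "is_path E0 E1 r s p = (case p of (v, es) \<Rightarrow> v \<in> E0 \<and> set es \<subseteq> E1 \<and>
      (es \<noteq> [] \<longrightarrow> s (hd es) = v) \<and>
      (\<forall>k. Suc k < length es \<longrightarrow> r (es ! k) = s (es ! Suc k)))"

definition path_range :: "('e \<Rightarrow> 'v) \<Rightarrow> 'v \<times> 'e list \<Rightarrow> 'v" where
  "path_range r p = (case p of (v, es) \<Rightarrow> if es = [] then v else r (last es))"

definition path_word :: "'v \<times> 'e list \<Rightarrow> ('v,'e) gen list" where
  "path_word p = (case p of (v, es) \<Rightarrow> if es = [] then [V v] else map Ed es)"

definition ghost_word :: "'v \<times> 'e list \<Rightarrow> ('v,'e) gen list" where
  "ghost_word p = (case p of (v, es) \<Rightarrow> if es = [] then [V v] else map Gh (rev es))"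

definition path_weight :: "('v \<Rightarrow> 'i S) \<Rightarrow> ('e \<Rightarrow> 'i S) \<Rightarrow> 'v \<times> 'e list \<Rightarrow> 'i S" where
  "path_weight wV wE p = (case p of (v, es) \<Rightarrow> foldl (\<lambda>acc e. smult acc (wE e)) (wV v) es)"

definition canonical_weight :: "'v set \<Rightarrow> 'e set \<Rightarrow> ('e \<Rightarrow> 'v) \<Rightarrow> ('e \<Rightarrow> 'v)
    \<Rightarrow> ('v \<Rightarrow> 'i S) \<Rightarrow> ('e \<Rightarrow> 'i S) \<Rightarrow> bool" where
  "canonical_weight E0 E1 r s wV wE =
    ((\<forall>v\<in>E0. \<exists>i. wV v = Some (i, 0, i)) \<and>
     (\<forall>\<alpha>\<in>E1. \<exists>i j. wE \<alpha> = Some (i, 1, j)) \<and>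
     (\<forall>\<alpha>\<in>E1. smult (wV (s \<alpha>)) (wE \<alpha>) = wE \<alpha> \<and> smult (wE \<alpha>) (wV (r \<alpha>)) = wE \<alpha>) \<and>
     (\<forall>f. f \<noteq> None \<and> smult f f = f \<longrightarrow>
        (\<forall>\<alpha>\<in>E1. \<forall>\<beta>\<in>E1. wV (s \<alpha>) = f \<and> wV (s \<beta>) = f \<longrightarrow> wE \<alpha> = wE \<beta>) \<and>
        (\<forall>\<alpha>\<in>E1. \<forall>\<beta>\<in>E1. wV (r \<alpha>) = f \<and> wV (r \<beta>) = f \<longrightarrow> wE \<alpha> = wE \<beta>)))"

text \<open>Representatives (in the free algebra) of the homogeneous component (L_R(E))_x:
  the R-span of the monomials mu eta^* with r(mu) = r(eta) and w(mu eta^*) = x.\<close>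
inductive_set component :: "'v set \<Rightarrow> 'e set \<Rightarrow> ('e \<Rightarrow> 'v) \<Rightarrow> ('e \<Rightarrow> 'v)
    \<Rightarrow> ('v \<Rightarrow> 'i S) \<Rightarrow> ('e \<Rightarrow> 'i S) \<Rightarrow> 'i S \<Rightarrow> (('v,'e) gen list \<Rightarrow> 'a::ring_1) set"
  for E0 E1 r s wV wE x where
  zero: "(\<lambda>_. 0) \<in> component E0 E1 r s wV wE x"
| step: "f \<in> component E0 E1 r s wV wE x \<Longrightarrow> is_path E0 E1 r s \<mu> \<Longrightarrow> is_path E0 E1 r s \<eta>
     \<Longrightarrow> path_range r \<mu> = path_range r \<eta>
     \<Longrightarrow> smult (path_weight wV wE \<mu>) (sinv (path_weight wV wE \<eta>)) = x
     \<Longrightarrow> (\<lambda>w. f w + (if w = path_word \<mu> @ ghost_word \<eta> then c else 0))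
           \<in> component E0 E1 r s wV wE x"

text \<open>Von Neumann regularity of the ring A/I-image (A a set of representatives,
  I the ideal): every a has b with a = a b a, modulo I.\<close>
definition vnr_mod :: "('g list \<Rightarrow> 'a::ring_1) set \<Rightarrow> ('g list \<Rightarrow> 'a) set \<Rightarrow> bool" where
  "vnr_mod A I = (\<forall>f\<in>A. \<exists>g\<in>A. fsub f (fmul (fmul f g) f) \<in> I)"

end

theory Submission
  imports Defs
begin

definition supp :: "('g list \<Rightarrow> 'a::ring_1) \<Rightarrow> 'g list set" where
  "supp F = {w. F w \<noteq> 0}"

definition Lsum :: "('g list \<Rightarrow> 'a) \<Rightarrow> ('g list \<Rightarrow> 'a::ring_1) \<Rightarrow> 'a" where
  "Lsum P F = (\<Sum>w\<in>supp F. P w * F w)"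

lemma Lsum_super:
  assumes "finite S" "supp F \<subseteq> S"
  shows "Lsum P F = (\<Sum>w\<in>S. P w * F w)"
  unfolding Lsum_def
  by (rule sum.mono_neutral_left) (use assms in \<open>auto simp: supp_def\<close>)

lemma supp_fmul:
  "supp (fmul A B) \<subseteq> (\<lambda>(u,y). u @ y) ` (supp A \<times> supp B)"
proof
  fix w assume "w \<in> supp (fmul A B)"
  then have "(\<Sum>i\<in>{..length w}. A (take i w) * B (drop i w)) \<noteq> 0"
    by (simp add: supp_def fmul_def)
  then obtain i where "A (take i w) * B (drop i w) \<noteq> 0"
    by (meson sum.neutral)
  then have "A (take i w) \<noteq> 0" "B (drop i w) \<noteq> 0" by auto
  then show "w \<in> (\<lambda>(u,y). u @ y) ` (supp A \<times> supp B)"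
    by (auto simp: supp_def image_iff) (metis append_take_drop_id)
qed

lemma finite_supp_fmul:
  "finite (supp A) \<Longrightarrow> finite (supp B) \<Longrightarrow> finite (supp (fmul A B))"
  by (rule finite_subset[OF supp_fmul]) auto

lemma fmul_expand:
  "fmul A B w = (\<Sum>p\<in>{p\<in>supp A \<times> supp B. fst p @ snd p = w}. A (fst p) * B (snd p))"
proof -
  let ?I = "{i\<in>{..length w}. A (take i w) \<noteq> 0 \<and> B (drop i w) \<noteq> 0}"
  have "fmul A B w = (\<Sum>i\<in>?I. A (take i w) * B (drop i w))"
    unfolding fmul_def
    by (rule sum.mono_neutral_right) auto
  also have "\<dots> = (\<Sum>p\<in>{p\<in>supp A \<times> supp B. fst p @ snd p = w}. A (fst p) * B (snd p))"
    by (rule sum.reindex_bij_witness[where i="\<lambda>p. length (fst p)" and j="\<lambda>i. (take i w, drop i w)"])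
       (auto simp: supp_def)
  finally show ?thesis .
qed

lemma Lsum_fmul:
  assumes fA: "finite (supp A)" and fB: "finite (supp B)"
  shows "Lsum P (fmul A B) = Lsum (\<lambda>y. Lsum (\<lambda>u. P (u @ y)) A) B"
proof -
  let ?P = "supp A \<times> supp B"
  let ?c = "\<lambda>p. fst p @ snd p"
  let ?W = "?c ` ?P"
  have fP: "finite ?P" using fA fB by auto
  have sub: "supp (fmul A B) \<subseteq> ?W" using supp_fmul[of A B] by (auto simp: case_prod_beta)
  have "Lsum P (fmul A B) = (\<Sum>w\<in>?W. P w * fmul A B w)"
    by (rule Lsum_super) (use fP sub in auto)
  also have "\<dots> = (\<Sum>w\<in>?W. \<Sum>p\<in>{p\<in>?P. ?c p = w}. P (?c p) * A (fst p) * B (snd p))"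
    by (rule sum.cong[OF refl]) (auto simp: fmul_expand sum_distrib_left mult.assoc intro!: sum.cong)
  also have "\<dots> = (\<Sum>p\<in>?P. P (?c p) * A (fst p) * B (snd p))"
    by (rule sum.group) (use fP in auto)
  also have "\<dots> = (\<Sum>u\<in>supp A. \<Sum>y\<in>supp B. P (u @ y) * A u * B y)"
    by (simp add: sum.cartesian_product case_prod_beta)
  also have "\<dots> = (\<Sum>y\<in>supp B. \<Sum>u\<in>supp A. P (u @ y) * A u * B y)"
    by (rule sum.swap)
  also have "\<dots> = Lsum (\<lambda>y. Lsum (\<lambda>u. P (u @ y)) A) B"
    by (simp add: Lsum_def sum_distrib_right)
  finally show ?thesis .
qed

lemma Lsum_zero_fun: "Lsum (\<lambda>_. 0) F = 0" by (simp add: Lsum_def)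

lemma Lsum_cong: "(\<And>w. F w \<noteq> 0 \<Longrightarrow> P w = Q w) \<Longrightarrow> Lsum P F = Lsum Q F"
  unfolding Lsum_def by (rule sum.cong) (auto simp: supp_def)

lemma Lsum_fsub:
  assumes "finite (supp A)" "finite (supp B)"
  shows "Lsum P (fsub A B) = Lsum P A - Lsum P B"
proof -
  let ?S = "supp A \<union> supp B"
  have "Lsum P (fsub A B) = (\<Sum>w\<in>?S. P w * fsub A B w)"
    by (rule Lsum_super) (use assms in \<open>auto simp: supp_def fsub_def\<close>)
  moreover have "Lsum P A = (\<Sum>w\<in>?S. P w * A w)" by (rule Lsum_super) (use assms in auto)
  moreover have "Lsum P B = (\<Sum>w\<in>?S. P w * B w)" by (rule Lsum_super) (use assms in auto)
  ultimately show ?thesis by (simp add: fsub_def right_diff_distrib sum_subtractf)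
qed

lemma Lsum_pair:
  assumes "P w1 = P w2"
  shows "Lsum P (fsub (ind w1) (ind w2) :: 'g list \<Rightarrow> 'a::ring_1) = 0"
proof (cases "w1 = w2")
  case True
  then show ?thesis by (simp add: Lsum_def fsub_def supp_def)
next
  case False
  have "Lsum P (fsub (ind w1) (ind w2) :: 'g list \<Rightarrow> 'a) = (\<Sum>w\<in>{w1,w2}. P w * fsub (ind w1) (ind w2) w)"
    by (rule Lsum_super) (auto simp: supp_def fsub_def ind_def)
  then show ?thesis using False assms by (simp add: fsub_def ind_def)
qed

lemma Lsum_single0:
  assumes "P w1 = 0"
  shows "Lsum P (fsub (ind w1) (\<lambda>_. 0) :: 'g list \<Rightarrow> 'a::ring_1) = 0"
proof -
  have "Lsum P (fsub (ind w1) (\<lambda>_. 0) :: 'g list \<Rightarrow> 'a) = (\<Sum>w\<in>{w1}. P w * fsub (ind w1) (\<lambda>_. 0) w)"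
    by (rule Lsum_super) (auto simp: supp_def fsub_def ind_def)
  then show ?thesis using assms by (simp add: fsub_def ind_def)
qed

type_synonym ('v,'e) st = "'v \<times> (nat \<Rightarrow> 'e option)"

fun gact :: "'e set \<Rightarrow> ('e \<Rightarrow> 'v) \<Rightarrow> ('e \<Rightarrow> 'v) \<Rightarrow> ('v,'e) gen \<Rightarrow> ('v,'e) st \<Rightarrow> ('v,'e) st option" where
  "gact E1 r s (V u) (v,f) = (if u = v then Some (v,f) else None)"
| "gact E1 r s (Ed \<alpha>) (v,f) = (if \<alpha> \<in> E1 \<and> r \<alpha> = v then Some (s \<alpha>, case_nat (Some \<alpha>) f) else None)"
| "gact E1 r s (Gh \<alpha>) (v,f) = (if f 0 = Some \<alpha> then Some (r \<alpha>, \<lambda>n. f (Suc n)) else None)"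

fun act :: "'e set \<Rightarrow> ('e \<Rightarrow> 'v) \<Rightarrow> ('e \<Rightarrow> 'v) \<Rightarrow> ('v,'e) gen list \<Rightarrow> ('v,'e) st \<Rightarrow> ('v,'e) st option" where
  "act E1 r s [] q = Some q"
| "act E1 r s (g # w) q = (case act E1 r s w q of None \<Rightarrow> None | Some p \<Rightarrow> gact E1 r s g p)"

lemma act_append:
  "act E1 r s (u @ y) q = (case act E1 r s y q of None \<Rightarrow> None | Some p \<Rightarrow> act E1 r s u p)"
  by (induction u) (auto split: option.split)

fun vtx :: "('e \<Rightarrow> 'v) \<Rightarrow> 'v \<Rightarrow> (nat \<Rightarrow> 'e option) \<Rightarrow> nat \<Rightarrow> 'v" where
  "vtx r v f 0 = v"
| "vtx r v f (Suc n) = (case f n of Some \<alpha> \<Rightarrow> r \<alpha> | None \<Rightarrow> vtx r v f n)"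

definition regv :: "'e set \<Rightarrow> ('e \<Rightarrow> 'v) \<Rightarrow> 'v \<Rightarrow> bool" where
  "regv E1 s u = ({\<alpha>\<in>E1. s \<alpha> = u} \<noteq> {} \<and> finite {\<alpha>\<in>E1. s \<alpha> = u})"

definition valid :: "'e set \<Rightarrow> ('e \<Rightarrow> 'v) \<Rightarrow> ('e \<Rightarrow> 'v) \<Rightarrow> ('v,'e) st \<Rightarrow> bool" where
  "valid E1 r s q = (\<forall>n. case snd q n of
      Some \<alpha> \<Rightarrow> \<alpha> \<in> E1 \<and> s \<alpha> = vtx r (fst q) (snd q) n
    | None \<Rightarrow> snd q (Suc n) = None \<and> \<not> regv E1 s (vtx r (fst q) (snd q) n))"

lemma vtx_shift: "f 0 = Some \<alpha> \<Longrightarrow> vtx r (r \<alpha>) (\<lambda>n. f (Suc n)) n = vtx r v f (Suc n)"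
  by (induction n) (auto split: option.split)

lemma vtx_cons: "r \<alpha> = v \<Longrightarrow> vtx r (s \<alpha>) (case_nat (Some \<alpha>) f) (Suc n) = vtx r v f n"
  by (induction n) (auto split: option.split)

lemma valid_iff:
  "valid E1 r s (v,f) \<longleftrightarrow> (\<forall>n. (\<forall>\<alpha>. f n = Some \<alpha> \<longrightarrow> \<alpha> \<in> E1 \<and> s \<alpha> = vtx r v f n) \<and>
      (f n = None \<longrightarrow> f (Suc n) = None \<and> \<not> regv E1 s (vtx r v f n)))"
  unfolding valid_def by (auto split: option.splits)

lemma valid_gact:
  assumes "valid E1 r s q" "gact E1 r s g q = Some p"
  shows "valid E1 r s p"
proof -
  obtain v f where q: "q = (v,f)" by fastforce
  have vq: "\<And>n \<alpha>. f n = Some \<alpha> \<Longrightarrow> \<alpha> \<in> E1 \<and> s \<alpha> = vtx r v f n"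
    "\<And>n. f n = None \<Longrightarrow> f (Suc n) = None \<and> \<not> regv E1 s (vtx r v f n)"
    using assms(1) unfolding q valid_iff by blast+
  show ?thesis
  proof (cases g)
    case (V u)
    then show ?thesis using assms q by (auto split: if_splits)
  next
    case (Ed \<alpha>)
    then have p: "p = (s \<alpha>, case_nat (Some \<alpha>) f)" and a: "\<alpha> \<in> E1" "r \<alpha> = v"
      using assms q by (auto split: if_splits)
    have vc: "vtx r (s \<alpha>) (case_nat (Some \<alpha>) f) (Suc m) = vtx r v f m" for m
      using a(2) by (rule vtx_cons)
    have A: "\<beta> \<in> E1 \<and> s \<beta> = vtx r (s \<alpha>) (case_nat (Some \<alpha>) f) n"
      if h: "case_nat (Some \<alpha>) f n = Some \<beta>" for n \<beta>
    proof (cases n)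
      case 0 then show ?thesis using a h by simp
    next
      case (Suc m) then show ?thesis using h vq(1)[of m \<beta>] vc[of m] by simp
    qed
    have B: "case_nat (Some \<alpha>) f (Suc n) = None \<and> \<not> regv E1 s (vtx r (s \<alpha>) (case_nat (Some \<alpha>) f) n)"
      if h: "case_nat (Some \<alpha>) f n = None" for n
    proof -
      obtain m where m: "n = Suc m" using h by (cases n) auto
      show ?thesis using h m vq(2)[of m] vc[of m] by simp
    qed
    show ?thesis unfolding valid_iff p using A B by blast
  next
    case (Gh \<alpha>)
    then have p: "p = (r \<alpha>, \<lambda>n. f (Suc n))" and a: "f 0 = Some \<alpha>"
      using assms q by (auto split: if_splits)
    have vs: "vtx r (r \<alpha>) (\<lambda>n. f (Suc n)) n = vtx r v f (Suc n)" for n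
      using a by (rule vtx_shift)
    show ?thesis unfolding valid_iff p
      using vq(1)[of "Suc _"] vq(2)[of "Suc _"] vs by simp
  qed
qed

lemma valid_act: "valid E1 r s q \<Longrightarrow> act E1 r s w q = Some p \<Longrightarrow> valid E1 r s p"
proof (induction w arbitrary: p)
  case Nil then show ?case by simp
next
  case (Cons g w)
  then show ?case by (auto split: option.splits intro: valid_gact)
qed

lemma valid_0:
  assumes "valid E1 r s (v,f)"
  shows "f 0 = Some \<alpha> \<Longrightarrow> \<alpha> \<in> E1 \<and> s \<alpha> = v"
    and "f 0 = None \<Longrightarrow> \<not> regv E1 s v"
  using assms unfolding valid_iff by (metis vtx.simps(1))+

lemma valid_exists: "\<exists>f. valid E1 r s (v,f)"
proof -
  define nxt where "nxt u = (if regv E1 s u then Some (SOME \<alpha>. \<alpha> \<in> E1 \<and> s \<alpha> = u) else None)" for u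
  define vs where "vs = rec_nat v (\<lambda>n u. case nxt u of Some \<alpha> \<Rightarrow> r \<alpha> | None \<Rightarrow> u)"
  have vs0: "vs 0 = v" and vsS: "vs (Suc n) = (case nxt (vs n) of Some \<alpha> \<Rightarrow> r \<alpha> | None \<Rightarrow> vs n)" for n
    unfolding vs_def by (simp_all split: option.split)
  define f where "f n = nxt (vs n)" for n
  have vv: "vtx r v f n = vs n" for n
    by (induction n) (simp_all add: vs0 vsS f_def split: option.split)
  have "valid E1 r s (v,f)"
    unfolding valid_iff
  proof
    fix n
    show "(\<forall>\<alpha>. f n = Some \<alpha> \<longrightarrow> \<alpha> \<in> E1 \<and> s \<alpha> = vtx r v f n) \<and>
      (f n = None \<longrightarrow> f (Suc n) = None \<and> \<not> regv E1 s (vtx r v f n))"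
    proof (cases "regv E1 s (vs n)")
      case True
      then have "\<exists>\<alpha>. \<alpha> \<in> E1 \<and> s \<alpha> = vs n" by (auto simp: regv_def)
      then have "(SOME \<alpha>. \<alpha> \<in> E1 \<and> s \<alpha> = vs n) \<in> E1 \<and> s (SOME \<alpha>. \<alpha> \<in> E1 \<and> s \<alpha> = vs n) = vs n"
        by (rule someI_ex)
      then show ?thesis using True by (simp add: f_def nxt_def vv)
    next
      case False
      then show ?thesis by (simp add: f_def nxt_def vv vsS)
    qed
  qed
  then show ?thesis by blast
qed

definition psi :: "'e set \<Rightarrow> ('e \<Rightarrow> 'v) \<Rightarrow> ('e \<Rightarrow> 'v) \<Rightarrow> ('v,'e) st \<Rightarrow> (('v,'e) st \<Rightarrow> 'a::ring_1)
   \<Rightarrow> ('v,'e) gen list \<Rightarrow> 'a" where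
  "psi E1 r s q H w = (case act E1 r s w q of None \<Rightarrow> 0 | Some p \<Rightarrow> H p)"

definition kills :: "'e set \<Rightarrow> ('e \<Rightarrow> 'v) \<Rightarrow> ('e \<Rightarrow> 'v) \<Rightarrow> (('v,'e) gen list \<Rightarrow> 'a::ring_1) \<Rightarrow> bool" where
  "kills E1 r s F = (\<forall>q H. valid E1 r s q \<longrightarrow> Lsum (psi E1 r s q H) F = 0)"

lemma psi_append:
  "psi E1 r s q H (u @ y) = (case act E1 r s y q of None \<Rightarrow> 0 | Some p \<Rightarrow> psi E1 r s p H u)"
  by (simp add: psi_def act_append split: option.split)

lemma kills_mult:
  fixes E1 :: "'e set" and r s :: "'e \<Rightarrow> 'v" and f :: "('v,'e) gen list \<Rightarrow> 'a::ring_1"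
  assumes fa: "finite (supp a)" and ff: "finite (supp f)" and fb: "finite (supp b)"
    and k: "kills E1 r s f"
  shows "kills E1 r s (fmul (fmul a f) b)"
  unfolding kills_def
proof (intro allI impI)
  fix q and H :: "('v,'e) st \<Rightarrow> 'a" assume vq: "valid E1 r s q"
  have inner: "Lsum (\<lambda>u. psi E1 r s q H (u @ y)) (fmul a f) = 0" for y
  proof (cases "act E1 r s y q")
    case None
    then have "Lsum (\<lambda>u. psi E1 r s q H (u @ y)) (fmul a f) = Lsum (\<lambda>_. 0) (fmul a f)"
      by (intro Lsum_cong) (simp add: psi_append)
    then show ?thesis by (simp add: Lsum_zero_fun)
  next
    case (Some q')
    have vq': "valid E1 r s q'" using valid_act[OF vq Some] .
    define H' where "H' p = Lsum (psi E1 r s p H) a" for p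
    have "Lsum (\<lambda>u. psi E1 r s q H (u @ y)) (fmul a f) = Lsum (psi E1 r s q' H) (fmul a f)"
      by (intro Lsum_cong) (simp add: psi_append Some)
    also have "\<dots> = Lsum (\<lambda>x. Lsum (\<lambda>u. psi E1 r s q' H (u @ x)) a) f"
      by (rule Lsum_fmul[OF fa ff])
    also have "\<dots> = Lsum (psi E1 r s q' H') f"
    proof (intro Lsum_cong)
      fix x
      show "Lsum (\<lambda>u. psi E1 r s q' H (u @ x)) a = psi E1 r s q' H' x"
      proof (cases "act E1 r s x q'")
        case None
        then have "Lsum (\<lambda>u. psi E1 r s q' H (u @ x)) a = Lsum (\<lambda>_. 0) a"
          by (intro Lsum_cong) (simp add: psi_append)
        then show ?thesis using None by (simp add: psi_def Lsum_zero_fun)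
      next
        case (Some p)
        then have "Lsum (\<lambda>u. psi E1 r s q' H (u @ x)) a = Lsum (psi E1 r s p H) a"
          by (intro Lsum_cong) (simp add: psi_append)
        then show ?thesis using Some by (simp add: psi_def H'_def)
      qed
    qed
    also have "\<dots> = 0" using k vq' unfolding kills_def by blast
    finally show ?thesis .
  qed
  have "Lsum (psi E1 r s q H) (fmul (fmul a f) b)
      = Lsum (\<lambda>y. Lsum (\<lambda>u. psi E1 r s q H (u @ y)) (fmul a f)) b"
    by (rule Lsum_fmul[OF finite_supp_fmul[OF fa ff] fb])
  also have "\<dots> = Lsum (\<lambda>_. 0) b" by (intro Lsum_cong) (simp add: inner)
  finally show "Lsum (psi E1 r s q H) (fmul (fmul a f) b) = 0" by (simp add: Lsum_zero_fun)
qed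

lemma kills_add:
  fixes E1 :: "'e set" and r s :: "'e \<Rightarrow> 'v" and f :: "('v,'e) gen list \<Rightarrow> 'a::ring_1"
  assumes "finite (supp f)" "finite (supp g)" "kills E1 r s f" "kills E1 r s g"
  shows "kills E1 r s (\<lambda>w. f w + g w)"
  unfolding kills_def
proof (intro allI impI)
  fix q and H :: "('v,'e) st \<Rightarrow> 'a" assume vq: "valid E1 r s q"
  let ?S = "supp f \<union> supp g"
  have "Lsum (psi E1 r s q H) (\<lambda>w. f w + g w) = (\<Sum>w\<in>?S. psi E1 r s q H w * (f w + g w))"
    by (rule Lsum_super) (use assms in \<open>auto simp: supp_def\<close>)
  also have "\<dots> = (\<Sum>w\<in>?S. psi E1 r s q H w * f w) + (\<Sum>w\<in>?S. psi E1 r s q H w * g w)"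
    by (simp add: distrib_left sum.distrib)
  also have "\<dots> = Lsum (psi E1 r s q H) f + Lsum (psi E1 r s q H) g"
    using Lsum_super[of ?S f] Lsum_super[of ?S g] assms by auto
  also have "\<dots> = 0" using assms(3,4) vq unfolding kills_def by (metis add_0)
  finally show "Lsum (psi E1 r s q H) (\<lambda>w. f w + g w) = 0" .
qed

lemma fin_pair: "finite (supp (fsub (ind w1) (ind w2) :: 'g list \<Rightarrow> 'a::ring_1))"
  by (rule finite_subset[of _ "{w1,w2}"]) (auto simp: supp_def fsub_def ind_def)

lemma fin_single: "finite (supp (fsub (ind w1) (\<lambda>_. 0) :: 'g list \<Rightarrow> 'a::ring_1))"
  by (rule finite_subset[of _ "{w1}"]) (auto simp: supp_def fsub_def ind_def)

lemma kills_pair: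
  assumes "\<And>q. valid E1 r s q \<Longrightarrow> act E1 r s w1 q = act E1 r s w2 q"
  shows "kills E1 r s (fsub (ind w1) (ind w2) :: ('v,'e) gen list \<Rightarrow> 'a::ring_1)"
  unfolding kills_def using assms by (auto intro!: Lsum_pair simp: psi_def)

lemma kills_single:
  assumes "\<And>q. valid E1 r s q \<Longrightarrow> act E1 r s w1 q = None"
  shows "kills E1 r s (fsub (ind w1) (\<lambda>_. 0) :: ('v,'e) gen list \<Rightarrow> 'a::ring_1)"
  unfolding kills_def using assms by (auto intro!: Lsum_single0 simp: psi_def)

lemma ck_kills:
  fixes E1 :: "'e set" and r s :: "'e \<Rightarrow> 'v"
  assumes ne: "{\<alpha>\<in>E1. s \<alpha> = v} \<noteq> {}" and fin: "finite {\<alpha>\<in>E1. s \<alpha> = v}"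
  defines "F \<equiv> (fsub (\<lambda>w. \<Sum>\<alpha>\<in>{\<alpha>\<in>E1. s \<alpha> = v}. ind [Ed \<alpha>, Gh \<alpha>] w) (ind [V v])
      :: ('v,'e) gen list \<Rightarrow> 'a::ring_1)"
  shows "finite (supp F) \<and> kills E1 r s F"
proof -
  let ?A = "{\<alpha>\<in>E1. s \<alpha> = v}"
  let ?S = "(\<lambda>\<alpha>. [Ed \<alpha>, Gh \<alpha>]) ` ?A \<union> {[V v]}"
  have fS: "finite ?S" using fin by auto
  have sub: "supp F \<subseteq> ?S"
  proof
    fix w assume "w \<in> supp F"
    then have "F w \<noteq> 0" by (simp add: supp_def)
    then have "(\<Sum>\<alpha>\<in>?A. ind [Ed \<alpha>, Gh \<alpha>] w :: 'a) \<noteq> 0 \<or> w = [V v]"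
      by (auto simp: F_def fsub_def ind_def split: if_splits)
    then show "w \<in> ?S"
    proof
      assume "(\<Sum>\<alpha>\<in>?A. ind [Ed \<alpha>, Gh \<alpha>] w :: 'a) \<noteq> 0"
      then obtain \<alpha> where "\<alpha> \<in> ?A" "(ind [Ed \<alpha>, Gh \<alpha>] w :: 'a) \<noteq> 0"
        by (meson sum.not_neutral_contains_not_neutral)
      then show ?thesis by (auto simp: ind_def split: if_splits)
    qed auto
  qed
  have "kills E1 r s F"
    unfolding kills_def
  proof (intro allI impI)
    fix q and H :: "('v,'e) st \<Rightarrow> 'a" assume vq: "valid E1 r s q"
    obtain u f where q: "q = (u,f)" by fastforce
    let ?P = "psi E1 r s q H"
    have delta: "(\<Sum>w\<in>?S. ?P w * ind x w) = ?P x" if "x \<in> ?S" for x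
    proof -
      have "(\<Sum>w\<in>?S. ?P w * ind x w) = (\<Sum>w\<in>?S. if w = x then ?P w else 0)"
        by (rule sum.cong) (auto simp: ind_def)
      also have "\<dots> = ?P x" using fS that by (simp add: sum.delta')
      finally show ?thesis .
    qed
    have "Lsum ?P F = (\<Sum>w\<in>?S. ?P w * F w)" by (rule Lsum_super[OF fS sub])
    also have "\<dots> = (\<Sum>\<alpha>\<in>?A. \<Sum>w\<in>?S. ?P w * ind [Ed \<alpha>, Gh \<alpha>] w) - (\<Sum>w\<in>?S. ?P w * ind [V v] w)"
      apply (simp add: F_def fsub_def right_diff_distrib sum_subtractf sum_distrib_left)
      by (rule sum.swap)
    also have "\<dots> = (\<Sum>\<alpha>\<in>?A. ?P [Ed \<alpha>, Gh \<alpha>]) - ?P [V v]"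
    proof -
      have d1: "(\<Sum>\<alpha>\<in>?A. \<Sum>w\<in>?S. ?P w * ind [Ed \<alpha>, Gh \<alpha>] w) = (\<Sum>\<alpha>\<in>?A. ?P [Ed \<alpha>, Gh \<alpha>])"
        by (rule sum.cong[OF refl], rule delta) auto
      have d2: "(\<Sum>w\<in>?S. ?P w * ind [V v] w) = ?P [V v]" by (rule delta) auto
      show ?thesis by (simp only: d1 d2)
    qed
    also have "\<dots> = 0"
    proof -
      have a1: "?P [Ed \<alpha>, Gh \<alpha>] = (if f 0 = Some \<alpha> then H q else 0)" if "\<alpha> \<in> ?A" for \<alpha>
      proof (cases "f 0 = Some \<alpha>")
        case True
        then have "s \<alpha> = u" "\<alpha> \<in> E1" using valid_0(1)[of E1 r s u f \<alpha>] vq q by auto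
        moreover have "case_nat (Some \<alpha>) (\<lambda>n. f (Suc n)) = f"
          using True by (auto split: nat.split)
        ultimately show ?thesis using True q by (simp add: psi_def)
      qed (simp add: psi_def q)
      have a2: "?P [V v] = (if u = v then H q else 0)" by (simp add: psi_def q)
      show ?thesis
      proof (cases "f 0")
        case None
        then have "\<not> regv E1 s u" using valid_0(2)[of E1 r s u f] vq q by auto
        then have "u \<noteq> v" using ne fin by (auto simp: regv_def)
        then show ?thesis using a1 a2 None by simp
      next
        case (Some \<beta>)
        then have b: "\<beta> \<in> E1" "s \<beta> = u" using valid_0(1)[of E1 r s u f \<beta>] vq q by auto
        show ?thesis
        proof (cases "u = v")
          case True
          then have "\<beta> \<in> ?A" using b by auto
          then have "(\<Sum>\<alpha>\<in>?A. ?P [Ed \<alpha>, Gh \<alpha>]) = (\<Sum>\<alpha>\<in>?A. if \<alpha> = \<beta> then H q else 0)"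
            using a1 Some by (intro sum.cong) auto
          also have "\<dots> = H q" using fin \<open>\<beta> \<in> ?A\<close> by (simp add: sum.delta')
          finally show ?thesis using a2 True by simp
        next
          case False
          then have "(\<Sum>\<alpha>\<in>?A. ?P [Ed \<alpha>, Gh \<alpha>]) = (\<Sum>\<alpha>\<in>?A. 0)"
            using a1 Some b by (intro sum.cong) auto
          then show ?thesis using a2 False by simp
        qed
      qed
    qed
    finally show "Lsum ?P F = 0" .
  qed
  then show ?thesis using finite_subset[OF sub fS] by blast
qed

lemma kills_pair':
  assumes "\<And>u f. valid E1 r s (u,f) \<Longrightarrow> act E1 r s w1 (u,f) = act E1 r s w2 (u,f)"
  shows "finite (supp (fsub (ind w1) (ind w2) :: ('v,'e) gen list \<Rightarrow> 'a::ring_1))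
     \<and> kills E1 r s (fsub (ind w1) (ind w2) :: ('v,'e) gen list \<Rightarrow> 'a::ring_1)"
  using assms fin_pair kills_pair by (metis surj_pair)

lemma kills_single':
  assumes "\<And>u f. valid E1 r s (u,f) \<Longrightarrow> act E1 r s w1 (u,f) = None"
  shows "finite (supp (fsub (ind w1) (\<lambda>_. 0) :: ('v,'e) gen list \<Rightarrow> 'a::ring_1))
     \<and> kills E1 r s (fsub (ind w1) (\<lambda>_. 0) :: ('v,'e) gen list \<Rightarrow> 'a::ring_1)"
  using assms fin_single kills_single by (metis surj_pair)

lemma rels_ok:
  fixes E1 :: "'e set" and r s :: "'e \<Rightarrow> 'v"
  assumes "F \<in> (lpa_rels E0 E1 r s :: (('v,'e) gen list \<Rightarrow> 'a::ring_1) set)"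
  shows "finite (supp F) \<and> kills E1 r s F"
  using assms unfolding lpa_rels_def
proof (elim UnE)
  assume "F \<in> {fsub (ind [V v, V v']) (if v = v' then ind [V v] else (\<lambda>_. 0)) | v v'. v \<in> E0 \<and> v' \<in> E0}"
  then obtain v v' where F: "F = fsub (ind [V v, V v']) (if v = v' then ind [V v] else (\<lambda>_. 0))" by blast
  show ?thesis
  proof (cases "v = v'")
    case True then show ?thesis unfolding F by (simp, intro kills_pair') auto
  next
    case False then show ?thesis unfolding F by (simp, intro kills_single') auto
  qed
next
  assume "F \<in> {fsub (ind [V (s \<alpha>), Ed \<alpha>]) (ind [Ed \<alpha>]) | \<alpha>. \<alpha> \<in> E1}"
  then obtain \<alpha> where F: "F = fsub (ind [V (s \<alpha>), Ed \<alpha>]) (ind [Ed \<alpha>])" by blast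
  show ?thesis unfolding F by (intro kills_pair') auto
next
  assume "F \<in> {fsub (ind [Ed \<alpha>, V (r \<alpha>)]) (ind [Ed \<alpha>]) | \<alpha>. \<alpha> \<in> E1}"
  then obtain \<alpha> where F: "F = fsub (ind [Ed \<alpha>, V (r \<alpha>)]) (ind [Ed \<alpha>])" by blast
  show ?thesis unfolding F by (intro kills_pair') auto
next
  assume "F \<in> {fsub (ind [V (r \<alpha>), Gh \<alpha>]) (ind [Gh \<alpha>]) | \<alpha>. \<alpha> \<in> E1}"
  then obtain \<alpha> where F: "F = fsub (ind [V (r \<alpha>), Gh \<alpha>]) (ind [Gh \<alpha>])" by blast
  show ?thesis unfolding F by (intro kills_pair') auto
next
  assume "F \<in> {fsub (ind [Gh \<alpha>, V (s \<alpha>)]) (ind [Gh \<alpha>]) | \<alpha>. \<alpha> \<in> E1}"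
  then obtain \<alpha> where F: "F = fsub (ind [Gh \<alpha>, V (s \<alpha>)]) (ind [Gh \<alpha>])" by blast
  show ?thesis unfolding F
  proof (intro kills_pair')
    fix u f assume v: "valid E1 r s (u, f)"
    show "act E1 r s [Gh \<alpha>, V (s \<alpha>)] (u, f) = act E1 r s [Gh \<alpha>] (u, f)"
      using valid_0(1)[OF v, of \<alpha>] by auto
  qed
next
  assume "F \<in> {fsub (ind [Gh \<alpha>, Ed \<alpha>']) (if \<alpha> = \<alpha>' then ind [V (r \<alpha>)] else (\<lambda>_. 0))
        | \<alpha> \<alpha>'. \<alpha> \<in> E1 \<and> \<alpha>' \<in> E1}"
  then obtain \<alpha> \<alpha>' where F: "F = fsub (ind [Gh \<alpha>, Ed \<alpha>']) (if \<alpha> = \<alpha>' then ind [V (r \<alpha>)] else (\<lambda>_. 0))"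
    and a: "\<alpha> \<in> E1" by blast
  show ?thesis
  proof (cases "\<alpha> = \<alpha>'")
    case True then show ?thesis unfolding F using a by (simp, intro kills_pair') auto
  next
    case False then show ?thesis unfolding F by (simp, intro kills_single') auto
  qed
next
  assume "F \<in> {fsub (\<lambda>w. \<Sum>\<alpha>\<in>{\<alpha>\<in>E1. s \<alpha> = v}. ind [Ed \<alpha>, Gh \<alpha>] w) (ind [V v])
        | v. v \<in> E0 \<and> {\<alpha>\<in>E1. s \<alpha> = v} \<noteq> {} \<and> finite {\<alpha>\<in>E1. s \<alpha> = v}}"
  then obtain v where F: "F = fsub (\<lambda>w. \<Sum>\<alpha>\<in>{\<alpha>\<in>E1. s \<alpha> = v}. ind [Ed \<alpha>, Gh \<alpha>] w) (ind [V v])"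
    and ne: "{\<alpha>\<in>E1. s \<alpha> = v} \<noteq> {}" and fin: "finite {\<alpha>\<in>E1. s \<alpha> = v}" by blast
  show ?thesis unfolding F by (rule ck_kills[OF ne fin])
qed

lemma ideal_ok:
  fixes E1 :: "'e set" and r s :: "'e \<Rightarrow> 'v"
  assumes "F \<in> (lpa_ideal E0 E1 r s :: (('v,'e) gen list \<Rightarrow> 'a::ring_1) set)"
  shows "finite (supp F) \<and> kills E1 r s F"
  using assms
proof (induction rule: lpa_ideal.induct)
  case (rel f) then show ?case by (rule rels_ok)
next
  case zero then show ?case by (simp add: supp_def kills_def Lsum_def)
next
  case (add f g) then show ?case
    using kills_add[of f g E1 r s] by (auto intro: finite_subset[of _ "supp f \<union> supp g"] simp: supp_def)
next
  case (mult f a b)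
  have fa: "finite (supp a)" and fb: "finite (supp b)"
    using mult.hyps by (auto simp: free_alg_def supp_def)
  then show ?case using mult.IH kills_mult[OF fa _ fb]
    finite_supp_fmul[OF finite_supp_fmul[OF fa] fb] by blast
qed

lemma comp_fin:
  "f \<in> component E0 E1 r s wV wE x \<Longrightarrow> finite (supp f)"
proof (induction rule: component.induct)
  case zero then show ?case by (simp add: supp_def)
next
  case (step f \<mu> \<eta> c)
  show ?case
    by (rule finite_subset[of _ "insert (path_word \<mu> @ ghost_word \<eta>) (supp f)"])
       (use step in \<open>auto simp: supp_def\<close>)
qed

theorem lemma5p11:
  fixes E0 :: "'v set" and E1 :: "'e set" and r s :: "'e \<Rightarrow> 'v"
    and wV :: "'v \<Rightarrow> 'i S" and wE :: "'e \<Rightarrow> 'i S"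
  assumes graph: "\<forall>\<alpha>\<in>E1. s \<alpha> \<in> E0 \<and> r \<alpha> \<in> E0"
    and not_null: "E0 \<noteq> {}"
    and canon: "canonical_weight E0 E1 r s wV wE"
    and reg: "\<forall>x. x \<noteq> None \<and> smult x x = x \<longrightarrow>
       vnr_mod (component E0 E1 r s wV wE x :: (('v,'e) gen list \<Rightarrow> 'a::ring_1) set)
               (lpa_ideal E0 E1 r s)"
  shows "\<forall>a::'a. \<exists>b. a = a * b * a"
proof
  fix a :: 'a
  obtain v where v: "v \<in> E0" using not_null by blast
  have "\<forall>v\<in>E0. \<exists>i. wV v = Some (i, 0, i)"
    using canon unfolding canonical_weight_def by (elim conjE)
  then obtain i where wi: "wV v = Some (i, 0, i)" using v by blast
  let ?x = "Some (i, 0::int, i)"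
  have xi: "?x \<noteq> None \<and> smult ?x ?x = ?x" by simp
  let ?vv = "[V v, V v] :: ('v,'e) gen list"
  define F :: "('v,'e) gen list \<Rightarrow> 'a" where
    "F = (\<lambda>w. (\<lambda>_. 0) w + (if w = path_word (v, [] :: 'e list) @ ghost_word (v, [] :: 'e list) then a else 0))"
  have Fc: "F \<in> component E0 E1 r s wV wE ?x"
    unfolding F_def
    by (rule component.step[OF component.zero])
       (use v wi in \<open>auto simp: is_path_def path_weight_def\<close>)
  have Fw: "F w = (if w = ?vv then a else 0)" for w
    by (simp add: F_def path_word_def ghost_word_def)
  have Fs: "supp F \<subseteq> {?vv}" by (auto simp: supp_def Fw)
  have fF: "finite (supp F)" using Fs finite_subset by blast
  obtain G where Gc: "G \<in> component E0 E1 r s wV wE ?x"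
    and GI: "fsub F (fmul (fmul F G) F) \<in> lpa_ideal E0 E1 r s"
    using reg xi Fc unfolding vnr_mod_def by blast
  have fG: "finite (supp G)" using Gc by (rule comp_fin)
  have K: "kills E1 r s (fsub F (fmul (fmul F G) F))" using ideal_ok[OF GI] by blast
  obtain f0 where vq0: "valid E1 r s (v, f0)" using valid_exists[of E1 r s v] by blast
  define q0 where "q0 = (v, f0)"
  define H :: "('v,'e) st \<Rightarrow> 'a" where "H p = (if p = q0 then 1 else 0)" for p
  let ?P = "psi E1 r s q0 H"
  have actvv: "act E1 r s ?vv p = (if fst p = v then Some p else None)" for p
    by (cases p) auto
  have Pvv: "?P ?vv = 1" by (simp add: psi_def actvv q0_def H_def)
  have psivv: "psi E1 r s p H ?vv = (if fst p = v then H p else 0)" for p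
    by (cases p) (auto simp: psi_def)
  define c where "c x = (if act E1 r s x q0 = Some q0 then (1::'a) else 0)" for x
  have Pc: "?P (?vv @ x @ ?vv) = c x" for x
  proof -
    have "?P (?vv @ x @ ?vv) = ?P ((?vv @ x) @ ?vv)" by simp
    also have "\<dots> = ?P (?vv @ x)"
      unfolding psi_append[of E1 r s q0 H "?vv @ x" ?vv] by (simp add: actvv q0_def)
    also have "\<dots> = c x"
      unfolding psi_append[of E1 r s q0 H ?vv x]
      by (cases "act E1 r s x q0") (auto simp: psivv c_def H_def q0_def)
    finally show ?thesis .
  qed
  have LF: "Lsum \<Psi> F = \<Psi> ?vv * a" for \<Psi> :: "('v,'e) gen list \<Rightarrow> 'a"
  proof -
    have "Lsum \<Psi> F = (\<Sum>w\<in>{?vv}. \<Psi> w * F w)" by (rule Lsum_super) (use Fs in auto)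
    then show ?thesis by (simp add: Fw)
  qed
  have L1: "Lsum ?P F = a" using LF Pvv by simp
  have L2: "Lsum ?P (fmul (fmul F G) F) = a * Lsum c G * a"
  proof -
    have "Lsum ?P (fmul (fmul F G) F) = Lsum (\<lambda>y. Lsum (\<lambda>z. ?P (z @ y)) (fmul F G)) F"
      by (rule Lsum_fmul[OF finite_supp_fmul[OF fF fG] fF])
    also have "\<dots> = Lsum (\<lambda>z. ?P (z @ ?vv)) (fmul F G) * a"
      by (rule LF)
    also have "Lsum (\<lambda>z. ?P (z @ ?vv)) (fmul F G) = Lsum (\<lambda>x. Lsum (\<lambda>u. ?P (u @ x @ ?vv)) F) G"
      using Lsum_fmul[OF fF fG, of "\<lambda>z. ?P (z @ ?vv)"] by (simp only: append_assoc)
    also have "\<dots> = Lsum (\<lambda>x. c x * a) G"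
      by (rule Lsum_cong) (simp only: LF Pc append_assoc)
    also have "\<dots> = a * Lsum c G"
    proof -
      have "c x * a = a * c x" for x by (simp add: c_def)
      then show ?thesis by (simp add: Lsum_def sum_distrib_left mult.assoc)
    qed
    finally show ?thesis by (simp add: mult.assoc)
  qed
  have "Lsum ?P (fsub F (fmul (fmul F G) F)) = 0"
    using K vq0 unfolding kills_def q0_def by blast
  then have "a - a * Lsum c G * a = 0"
    using Lsum_fsub[OF fF finite_supp_fmul[OF finite_supp_fmul[OF fF fG] fF]] L1 L2 by simp
  then show "\<exists>b. a = a * b * a" by auto
qed

end
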